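(* Let $R$ be a tolerance relation on $X=\{1,\ldots,n\}$ and let $A(R)$ be its tolerance algebra. Then $R$ is an equivalence relation if and only if $A(R)$ has no subalgebra isomorphic to $\mathfrak{A}_3$.
   Context: A tolerance relation on a set $X$ is a reflexive and symmetric relation $R\subset X\times X$. For $R$ a tolerance relation on $X=\{1,\ldots,n\}$, the tolerance algebra $A(R)$ is the complex vector space with basis $\{E_{ij}:(i,j)\in R\}$ (equivalently, the $n\times n$ complex matrices $a$ with $a_{ij}=0$ whenever $(i,j)\notin R$), with bilinear product determined by $E_{ij}\star E_{kl}=\delta_{jk}E_{il}$ if $(i,l)\in R$ and $E_{ij}\star E_{kl}=0$ otherwise, and involution $(E_{ij})^*=E_{ji}$ extended conjugate-linearly (i.e. $a\star b$ is the matrix product $ab$ with the entries in positions $(i,l)\notin R$ set to zero). $\mathfrak{A}_3$ denotes the tolerance algebra of the relation on $\{1,2,3\}$ with $1\sim 2$, $2\sim 3$, $1\not\sim 3$ (together with reflexivity and symmetry), i.e. $3\times 3$ matrices with vanishing $(1,3)$ and $(3,1)$ entries, with product the matrix product followed by setting the $(1,3)$ and $(3,1)$ entries to zero. *)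

theory Defs
  imports Complex_Main "HOL-Library.Numeral_Type"
begin

text \<open>Matrices indexed by a finite type 'n (playing the role of X = {1,...,n})
  are represented as functions 'n \<Rightarrow> 'n \<Rightarrow> complex.\<close>

definition tolerance :: "('n \<times> 'n) set \<Rightarrow> bool" where
  "tolerance R \<longleftrightarrow> refl R \<and> sym R"

definition tol_carrier :: "('n \<times> 'n) set \<Rightarrow> ('n \<Rightarrow> 'n \<Rightarrow> complex) set" where
  "tol_carrier R = {a. \<forall>i j. (i, j) \<notin> R \<longrightarrow> a i j = 0}"

definition tol_mult :: "('n::finite \<times> 'n) set \<Rightarrow> ('n \<Rightarrow> 'n \<Rightarrow> complex)
    \<Rightarrow> ('n \<Rightarrow> 'n \<Rightarrow> complex) \<Rightarrow> ('n \<Rightarrow> 'n \<Rightarrow> complex)" where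
  "tol_mult R a b = (\<lambda>i l. if (i, l) \<in> R then (\<Sum>j\<in>UNIV. a i j * b j l) else 0)"

definition tol_star :: "('n \<Rightarrow> 'n \<Rightarrow> complex) \<Rightarrow> ('n \<Rightarrow> 'n \<Rightarrow> complex)" where
  "tol_star a = (\<lambda>i j. cnj (a j i))"

definition mat_add :: "('n \<Rightarrow> 'n \<Rightarrow> complex) \<Rightarrow> ('n \<Rightarrow> 'n \<Rightarrow> complex) \<Rightarrow> ('n \<Rightarrow> 'n \<Rightarrow> complex)" where
  "mat_add a b = (\<lambda>i j. a i j + b i j)"

definition mat_smult :: "complex \<Rightarrow> ('n \<Rightarrow> 'n \<Rightarrow> complex) \<Rightarrow> ('n \<Rightarrow> 'n \<Rightarrow> complex)" where
  "mat_smult c a = (\<lambda>i j. c * a i j)"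

definition tol_subalgebra :: "('n::finite \<times> 'n) set \<Rightarrow> ('n \<Rightarrow> 'n \<Rightarrow> complex) set \<Rightarrow> bool" where
  "tol_subalgebra R S \<longleftrightarrow> S \<subseteq> tol_carrier R \<and> (\<lambda>i j. 0) \<in> S
     \<and> (\<forall>a\<in>S. \<forall>b\<in>S. mat_add a b \<in> S)
     \<and> (\<forall>c. \<forall>a\<in>S. mat_smult c a \<in> S)
     \<and> (\<forall>a\<in>S. \<forall>b\<in>S. tol_mult R a b \<in> S)
     \<and> (\<forall>a\<in>S. tol_star a \<in> S)"

definition tol_iso :: "('n::finite \<times> 'n) set \<Rightarrow> ('m::finite \<times> 'm) set
    \<Rightarrow> ('n \<Rightarrow> 'n \<Rightarrow> complex) set \<Rightarrow> ('m \<Rightarrow> 'm \<Rightarrow> complex) set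
    \<Rightarrow> (('n \<Rightarrow> 'n \<Rightarrow> complex) \<Rightarrow> ('m \<Rightarrow> 'm \<Rightarrow> complex)) \<Rightarrow> bool" where
  "tol_iso R R' S T f \<longleftrightarrow> bij_betw f S T
     \<and> (\<forall>a\<in>S. \<forall>b\<in>S. f (mat_add a b) = mat_add (f a) (f b))
     \<and> (\<forall>c. \<forall>a\<in>S. f (mat_smult c a) = mat_smult c (f a))
     \<and> (\<forall>a\<in>S. \<forall>b\<in>S. f (tol_mult R a b) = tol_mult R' (f a) (f b))
     \<and> (\<forall>a\<in>S. f (tol_star a) = tol_star (f a))"

text \<open>The relation on {1,2,3} (here the numeral type 3, whose elements are 1, 2, 3 = 0)
  with 1 ~ 2, 2 ~ 3, 1 not~ 3; A_3 is its tolerance algebra.\<close>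
definition R3 :: "(3 \<times> 3) set" where
  "R3 = {(i, j). \<not> ((i = 1 \<and> j = 3) \<or> (i = 3 \<and> j = 1))}"

end

theory Submission
  imports Defs
begin
lemma UNIV3: "(UNIV::3 set) = {1,2,3}"
proof -
  have "x \<in> {1,2,3}" for x :: 3
  proof (cases x)
    case (of_int z)
    then have "z = 0 \<or> z = 1 \<or> z = 2" by auto
    then show ?thesis using of_int by auto
  qed
  then show ?thesis by (simp add: set_eq_iff)
qed

lemma sum3: "(\<Sum>x\<in>(UNIV::3 set). F x) = F 1 + F 2 + F 3"
proof -
  have "sum F (UNIV::3 set) = sum F {1,2,3}" by (simp only: UNIV3)
  also have "\<dots> = F 1 + F 2 + F 3" by (simp add: add.assoc)
  finally show ?thesis .
qed

lemma mult_carrier: "tol_mult R a b \<in> tol_carrier R"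
  by (simp add: tol_mult_def tol_carrier_def)

lemma mult_trans:
  assumes "trans R" "a \<in> tol_carrier R" "b \<in> tol_carrier R"
  shows "tol_mult R a b = (\<lambda>i l. \<Sum>j\<in>UNIV. a i j * b j l)"
proof (intro ext)
  fix i l
  show "tol_mult R a b i l = (\<Sum>j\<in>UNIV. a i j * b j l)"
  proof (cases "(i,l) \<in> R")
    case True then show ?thesis by (simp add: tol_mult_def)
  next
    case False
    have "a i j * b j l = 0" for j
    proof (rule ccontr)
      assume "a i j * b j l \<noteq> 0"
      then have "(i,j) \<in> R" "(j,l) \<in> R" using assms(2,3) by (auto simp: tol_carrier_def)
      then show False using False assms(1) by (meson transD)
    qed
    then have "(\<Sum>j\<in>UNIV. a i j * b j l) = 0" by (simp add: sum.neutral)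
    then show ?thesis using False by (simp add: tol_mult_def)
  qed
qed

lemma mult_assoc:
  assumes "trans R" "a \<in> tol_carrier R" "b \<in> tol_carrier R" "c \<in> tol_carrier R"
  shows "tol_mult R (tol_mult R a b) c = tol_mult R a (tol_mult R b c)"
proof -
  have ab: "tol_mult R a b = (\<lambda>i l. \<Sum>j\<in>UNIV. a i j * b j l)" by (rule mult_trans[OF assms(1-3)])
  have bc: "tol_mult R b c = (\<lambda>i l. \<Sum>j\<in>UNIV. b i j * c j l)" by (rule mult_trans[OF assms(1,3,4)])
  have "tol_mult R (tol_mult R a b) c = (\<lambda>i l. \<Sum>k\<in>UNIV. tol_mult R a b i k * c k l)"
    by (rule mult_trans[OF assms(1) mult_carrier assms(4)])
  also have "\<dots> = (\<lambda>i l. \<Sum>k\<in>UNIV. (\<Sum>j\<in>UNIV. a i j * b j k) * c k l)"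
    by (simp only: ab)
  also have "\<dots> = (\<lambda>i l. \<Sum>j\<in>UNIV. a i j * (\<Sum>k\<in>UNIV. b j k * c k l))"
    by (intro ext) (simp add: sum_distrib_left sum_distrib_right mult.assoc, rule sum.swap)
  also have "\<dots> = tol_mult R a (tol_mult R b c)"
    using mult_trans[OF assms(1) assms(2) mult_carrier[of R b c]] by (simp only: bc)
  finally show ?thesis .
qed

definition E3 :: "3 \<Rightarrow> 3 \<Rightarrow> 3 \<Rightarrow> 3 \<Rightarrow> complex" where
  "E3 p q = (\<lambda>i j. if i = p \<and> j = q then 1 else 0)"

lemma R3c: "(1,2) \<in> R3" "(2,1) \<in> R3" "(2,3) \<in> R3" "(3,2) \<in> R3" "(1,1) \<in> R3" "(2,2) \<in> R3" "(3,3) \<in> R3"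
  "(1,3) \<notin> R3" "(3,1) \<notin> R3" by (simp_all add: R3_def)
lemma E3v: "E3 p q i j = (if i = p \<and> j = q then 1 else 0)" by (simp add: E3_def)
lemma d3: "(1::3) \<noteq> 2" "(1::3) \<noteq> 3" "(2::3) \<noteq> 3" "(2::3) \<noteq> 1" "(3::3) \<noteq> 1" "(3::3) \<noteq> 2" by simp_all

lemma E3c: "(p,q) \<in> R3 \<Longrightarrow> E3 p q \<in> tol_carrier R3"
  unfolding tol_carrier_def
proof (intro CollectI allI impI)
  fix i j assume "(p,q) \<in> R3" "(i,j) \<notin> R3"
  then have "\<not> (i = p \<and> j = q)" by blast
  then show "E3 p q i j = 0" by (simp only: E3v if_False)
qed

lemma no_iso:
  assumes "trans R" "tol_subalgebra R S" "tol_iso R R3 S (tol_carrier R3) f"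
  shows False
proof -
  have E: "E3 1 2 \<in> tol_carrier R3" "E3 2 3 \<in> tol_carrier R3" "E3 3 2 \<in> tol_carrier R3"
    using E3c R3c by blast+
  have bij: "bij_betw f S (tol_carrier R3)" using assms(3) by (simp add: tol_iso_def)
  then have surj: "f ` S = tol_carrier R3" by (simp add: bij_betw_def)
  obtain a b c where abc: "a \<in> S" "b \<in> S" "c \<in> S" "f a = E3 1 2" "f b = E3 2 3" "f c = E3 3 2"
  proof -
    have "E3 1 2 \<in> f ` S" "E3 2 3 \<in> f ` S" "E3 3 2 \<in> f ` S" using E surj by simp_all
    then obtain a b c where "a \<in> S" "E3 1 2 = f a" "b \<in> S" "E3 2 3 = f b" "c \<in> S" "E3 3 2 = f c"
      by (elim imageE)
    then show ?thesis using that by simp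
  qed
  have SC: "S \<subseteq> tol_carrier R" and Sm: "\<forall>a\<in>S. \<forall>b\<in>S. tol_mult R a b \<in> S"
    using assms(2) by (auto simp: tol_subalgebra_def)
  have fm: "\<forall>a\<in>S. \<forall>b\<in>S. f (tol_mult R a b) = tol_mult R3 (f a) (f b)"
    using assms(3) by (simp add: tol_iso_def)
  have eq: "tol_mult R (tol_mult R a b) c = tol_mult R a (tol_mult R b c)"
    using mult_assoc[OF assms(1)] abc SC by blast
  have "f (tol_mult R (tol_mult R a b) c) = tol_mult R3 (tol_mult R3 (E3 1 2) (E3 2 3)) (E3 3 2)"
    using fm Sm abc by simp
  moreover have "f (tol_mult R a (tol_mult R b c)) = tol_mult R3 (E3 1 2) (tol_mult R3 (E3 2 3) (E3 3 2))"
    using fm Sm abc by simp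
  ultimately have "tol_mult R3 (tol_mult R3 (E3 1 2) (E3 2 3)) (E3 3 2) 1 2
     = tol_mult R3 (E3 1 2) (tol_mult R3 (E3 2 3) (E3 3 2)) 1 2" using eq by simp
  moreover have "tol_mult R3 (tol_mult R3 (E3 1 2) (E3 2 3)) (E3 3 2) 1 2 = 0"
    unfolding tol_mult_def sum3 by (simp only: R3c E3v d3 if_True if_False simp_thms, simp)
  moreover have "tol_mult R3 (E3 1 2) (tol_mult R3 (E3 2 3) (E3 3 2)) 1 2 = 1"
    unfolding tol_mult_def sum3 by (simp only: R3c E3v d3 if_True if_False simp_thms, simp)
  ultimately show False by simp
qed
lemma has_iso:
  fixes R :: "('n::finite \<times> 'n) set"
  assumes symR: "sym R" and reflR: "\<And>x. (x,x) \<in> R"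
    and ij: "(i,j) \<in> R" and jk: "(j,k) \<in> R" and ik: "(i,k) \<notin> R"
  shows "\<exists>S f. tol_subalgebra R S \<and> tol_iso R R3 S (tol_carrier R3) f"
proof -
  have d: "i \<noteq> j" "j \<noteq> k" "i \<noteq> k" using ij jk ik reflR by auto
  have ki: "(k,i) \<notin> R" using ik symR by (meson symD)
  have ji: "(j,i) \<in> R" and kj: "(k,j) \<in> R" using ij jk symR by (meson symD)+
  define K where "K = {i,j,k}"
  define g :: "3 \<Rightarrow> 'n" where "g x = (if x = 1 then i else if x = 2 then j else k)" for x
  define gi :: "'n \<Rightarrow> 3" where "gi p = (if p = i then 1 else if p = j then 2 else 3)" for p
  have x3: "x = 1 \<or> x = 2 \<or> x = 3" for x :: 3 using UNIV3 by blast
  have gK: "g x \<in> K" for x by (simp add: g_def K_def)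
  have gig: "gi (g x) = x" for x using x3[of x] d by (auto simp: g_def gi_def)
  have ggi: "p \<in> K \<Longrightarrow> g (gi p) = p" for p using d by (auto simp: g_def gi_def K_def)
  have gR: "(g x, g y) \<in> R \<longleftrightarrow> (x, y) \<in> R3" for x y
    using x3[of x] x3[of y] reflR ij jk ik ki ji kj by (auto simp: g_def R3_def)
  have injg: "inj g" by (metis gig injI)
  have imgg: "g ` UNIV = K"
  proof
    show "g ` UNIV \<subseteq> K" using gK by auto
    show "K \<subseteq> g ` UNIV" using ggi by (metis image_eqI subsetI UNIV_I)
  qed
  define S where "S = {a. a \<in> tol_carrier R \<and> (\<forall>p q. a p q \<noteq> 0 \<longrightarrow> p \<in> K \<and> q \<in> K)}"
  define f where "f a = (\<lambda>x y. a (g x) (g y))" for a :: "'n \<Rightarrow> 'n \<Rightarrow> complex"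
  define h where "h b = (\<lambda>p q. if p \<in> K \<and> q \<in> K then b (gi p) (gi q) else 0)" for b :: "3 \<Rightarrow> 3 \<Rightarrow> complex"
  have s1: "mat_add a b \<in> S" if a: "a \<in> S" and b: "b \<in> S" for a b
    unfolding S_def mem_Collect_eq
  proof (rule conjI)
    show "mat_add a b \<in> tol_carrier R" using a b by (simp add: S_def tol_carrier_def mat_add_def)
    show "\<forall>p q. mat_add a b p q \<noteq> 0 \<longrightarrow> p \<in> K \<and> q \<in> K"
    proof (intro allI impI)
    fix p q assume "mat_add a b p q \<noteq> 0"
    then have "a p q \<noteq> 0 \<or> b p q \<noteq> 0" by (auto simp: mat_add_def)
    then show "p \<in> K \<and> q \<in> K" using a b unfolding S_def by blast
    qed
  qed
  have s2: "tol_mult R a b \<in> S" if a: "a \<in> S" and b: "b \<in> S" for a b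
    unfolding S_def mem_Collect_eq
  proof (rule conjI)
    show "tol_mult R a b \<in> tol_carrier R" by (rule mult_carrier)
    show "\<forall>p q. tol_mult R a b p q \<noteq> 0 \<longrightarrow> p \<in> K \<and> q \<in> K"
    proof (intro allI impI)
    fix p q assume "tol_mult R a b p q \<noteq> 0"
    then have "(\<Sum>l\<in>UNIV. a p l * b l q) \<noteq> 0" by (simp add: tol_mult_def split: if_splits)
    then obtain l where "a p l * b l q \<noteq> 0" by (meson sum.not_neutral_contains_not_neutral)
    then show "p \<in> K \<and> q \<in> K" using a b by (auto simp: S_def)
    qed
  qed
  have s3: "mat_smult c a \<in> S" if a: "a \<in> S" for a c
    using a by (auto simp: S_def tol_carrier_def mat_smult_def)
  have s4: "tol_star a \<in> S" if a: "a \<in> S" for a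
  proof -
    have nR: "(q,p) \<notin> R" if "(p,q) \<notin> R" for p q using that symR by (meson symD)
    show ?thesis using a nR unfolding S_def tol_carrier_def tol_star_def by simp
  qed
  have s0: "S \<subseteq> tol_carrier R" "(\<lambda>i j. 0) \<in> S" by (auto simp: S_def tol_carrier_def)
  have sub: "tol_subalgebra R S"
    unfolding tol_subalgebra_def using s0 by (simp add: s1 s2 s3 s4)
  have bij: "bij_betw f S (tol_carrier R3)"
  proof (rule bij_betw_byWitness[where f'=h])
    show "\<forall>a\<in>S. h (f a) = a"
    proof
      fix a assume a: "a \<in> S"
      show "h (f a) = a"
      proof (intro ext)
        fix p q show "h (f a) p q = a p q"
          using a ggi by (auto simp: h_def f_def S_def)
      qed
    qed
    show "\<forall>b\<in>tol_carrier R3. f (h b) = b"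
      using gK gig by (auto simp: h_def f_def)
    show "f ` S \<subseteq> tol_carrier R3"
      using gR by (auto simp: f_def S_def tol_carrier_def)
    show "h ` tol_carrier R3 \<subseteq> S"
    proof
      fix c assume "c \<in> h ` tol_carrier R3"
      then obtain b where b: "b \<in> tol_carrier R3" "c = h b" by blast
      have "(p, q) \<notin> R \<Longrightarrow> h b p q = 0" for p q
      proof (cases "p \<in> K \<and> q \<in> K")
        case True
        assume "(p,q) \<notin> R"
        then have "(gi p, gi q) \<notin> R3" using gR[of "gi p" "gi q"] ggi True by simp
        then show ?thesis using b True by (simp add: h_def tol_carrier_def)
      next
        case False then show ?thesis unfolding h_def by auto
      qed
      then have c1: "h b \<in> tol_carrier R" by (simp add: tol_carrier_def)
      have c2: "\<forall>p q. h b p q \<noteq> 0 \<longrightarrow> p \<in> K \<and> q \<in> K" unfolding h_def by auto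
      show "c \<in> S" using b(2) c1 c2 unfolding S_def by blast
    qed
  qed
  have mult: "f (tol_mult R a b) = tol_mult R3 (f a) (f b)" if a: "a \<in> S" and b: "b \<in> S" for a b
  proof (intro ext)
    fix x y
    have "(\<Sum>l\<in>UNIV. a (g x) l * b l (g y)) = (\<Sum>l\<in>K. a (g x) l * b l (g y))"
      using a by (intro sum.mono_neutral_right) (auto simp: S_def)
    also have "\<dots> = (\<Sum>z\<in>UNIV. a (g x) (g z) * b (g z) (g y))"
      using sum.reindex[OF injg, of "\<lambda>l. a (g x) l * b l (g y)"] imgg by simp
    finally show "f (tol_mult R a b) x y = tol_mult R3 (f a) (f b) x y"
      using gR by (simp add: f_def tol_mult_def)
  qed
  have iso: "tol_iso R R3 S (tol_carrier R3) f"
  proof -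
    have h1: "f (mat_add a b) = mat_add (f a) (f b)" for a b by (simp add: f_def mat_add_def)
    have h2: "f (mat_smult c a) = mat_smult c (f a)" for c a by (simp add: f_def mat_smult_def)
    have h3: "f (tol_star a) = tol_star (f a)" for a by (simp add: f_def tol_star_def)
    show ?thesis unfolding tol_iso_def using bij mult h1 h2 h3 by simp
  qed
  show ?thesis by (rule exI[of _ S], rule exI[of _ f], rule conjI[OF sub iso])
qed

theorem lemma3p6:
  fixes R :: "('n::finite \<times> 'n) set"
  assumes "tolerance R"
  shows "equiv UNIV R \<longleftrightarrow>
    \<not> (\<exists>S f. tol_subalgebra R S \<and> tol_iso R R3 S (tol_carrier R3) f)"
proof
  assume "equiv UNIV R"
  then have "trans R" by (simp add: equiv_def)
  then show "\<not> (\<exists>S f. tol_subalgebra R S \<and> tol_iso R R3 S (tol_carrier R3) f)"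
    using no_iso by blast
next
  assume n: "\<not> (\<exists>S f. tol_subalgebra R S \<and> tol_iso R R3 S (tol_carrier R3) f)"
  have r: "refl R" and s: "sym R" using assms by (auto simp: tolerance_def)
  have rx: "(x,x) \<in> R" for x using r by (simp add: refl_on_def)
  have "trans R"
  proof (rule transI, rule ccontr)
    fix x y z assume "(x,y) \<in> R" "(y,z) \<in> R" "(x,z) \<notin> R"
    then show False using has_iso[OF s rx] n by blast
  qed
  then show "equiv UNIV R" using r s by (simp add: equiv_def)
qed

end
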